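(* Let $p$ be an odd prime and let $k$ be an integer with $2\le k\le p-1$. Let $T$ be an orthogonal trade in $B_p$ of index $(1,k)$, let $s$ be a symbol occurring in $T$, and let $R\subseteq\mathbb{Z}_p$ be the set of rows $r$ such that $T$ contains a triple $(r,c,s)$ for some $c$. Then there exist a permutation $\phi$ of $R$ with no fixed points such that $U=\{(r,c,r+c): r\in R,\ c\in\mathbb{Z}_p\}$ is an orthogonal trade in $B_p$ of index $(1,k)$ with disjoint mate $U'=\{(r,c,\phi(r)+c): r\in R,\ c\in\mathbb{Z}_p\}$ (i.e. obtained by permuting the rows of $B_p$ indexed by $R$); in particular this trade has size $p|R|$.
   Context: All arithmetic is modulo $p$. A Latin square of order $p$ is viewed as a set of (row, column, symbol) triples in $\mathbb{Z}_p^3$. For $1\le k\le p-1$, $B_p(k)$ is the Latin square with symbol $ki+j$ in cell $(i,j)$, $i,j\in\mathbb{Z}_p$; $B_p=B_p(1)$. A Latin trade in a Latin square $L$ is a subset $T\subseteq L$ for which there is a partial Latin square $T'$ (a disjoint mate) such that $T$ and $T'$ occupy the same set of cells, $T\cap T'=\emptyset$, and each row (respectively column) of $T$ contains the same set of symbols as the corresponding row (column) of $T'$. Two Latin squares of order $p$ are orthogonal if superimposing them yields each of the $p^2$ ordered pairs exactly once. An orthogonal trade of index $(\ell,k)$ is a Latin trade $T\subseteq B_p(\ell)$ having a disjoint mate $T'$ such that $(B_p(\ell)\setminus T)\cup T'$ is orthogonal to $B_p(k)$. *)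

theory Defs
  imports Main "HOL-Computational_Algebra.Primes" "HOL-Combinatorics.Permutations"
begin

(* Z_p is represented by {0..<p} :: nat set, arithmetic taken mod p.
   A (partial) Latin square is a set of (row, column, symbol) triples. *)

type_synonym triple = "nat \<times> nat \<times> nat"

definition Bk :: "nat \<Rightarrow> nat \<Rightarrow> triple set" where
  "Bk p k = {(i, j, (k * i + j) mod p) | i j. i < p \<and> j < p}"

definition cells :: "triple set \<Rightarrow> (nat \<times> nat) set" where
  "cells T = {(r, c). \<exists>s. (r, c, s) \<in> T}"

definition row_syms :: "triple set \<Rightarrow> nat \<Rightarrow> nat set" where
  "row_syms T r = {s. \<exists>c. (r, c, s) \<in> T}"

definition col_syms :: "triple set \<Rightarrow> nat \<Rightarrow> nat set" where
  "col_syms T c = {s. \<exists>r. (r, c, s) \<in> T}"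

definition partial_latin :: "nat \<Rightarrow> triple set \<Rightarrow> bool" where
  "partial_latin p P \<longleftrightarrow>
     (\<forall>(r, c, s) \<in> P. r < p \<and> c < p \<and> s < p) \<and>
     (\<forall>r c s s'. (r, c, s) \<in> P \<longrightarrow> (r, c, s') \<in> P \<longrightarrow> s = s') \<and>
     (\<forall>r c c' s. (r, c, s) \<in> P \<longrightarrow> (r, c', s) \<in> P \<longrightarrow> c = c') \<and>
     (\<forall>r r' c s. (r, c, s) \<in> P \<longrightarrow> (r', c, s) \<in> P \<longrightarrow> r = r')"

definition disjoint_mate :: "nat \<Rightarrow> triple set \<Rightarrow> triple set \<Rightarrow> bool" where
  "disjoint_mate p T T' \<longleftrightarrow>
     partial_latin p T' \<and> cells T = cells T' \<and> T \<inter> T' = {} \<and>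
     (\<forall>r. row_syms T r = row_syms T' r) \<and> (\<forall>c. col_syms T c = col_syms T' c)"

definition latin_trade :: "nat \<Rightarrow> triple set \<Rightarrow> triple set \<Rightarrow> bool" where
  "latin_trade p L T \<longleftrightarrow> T \<subseteq> L \<and> (\<exists>T'. disjoint_mate p T T')"

definition orthogonal :: "nat \<Rightarrow> triple set \<Rightarrow> triple set \<Rightarrow> bool" where
  "orthogonal p L1 L2 \<longleftrightarrow>
     (\<forall>a < p. \<forall>b < p. card {(i, j). i < p \<and> j < p \<and> (i, j, a) \<in> L1 \<and> (i, j, b) \<in> L2} = 1)"

definition orth_trade_mate :: "nat \<Rightarrow> nat \<Rightarrow> nat \<Rightarrow> triple set \<Rightarrow> triple set \<Rightarrow> bool" where
  "orth_trade_mate p l k T T' \<longleftrightarrow>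
     T \<subseteq> Bk p l \<and> disjoint_mate p T T' \<and> orthogonal p ((Bk p l - T) \<union> T') (Bk p k)"

definition orthogonal_trade :: "nat \<Rightarrow> nat \<Rightarrow> nat \<Rightarrow> triple set \<Rightarrow> bool" where
  "orthogonal_trade p l k T \<longleftrightarrow> (\<exists>T'. orth_trade_mate p l k T T')"

end

theory Submission
  imports Defs
begin

lemma md: "int p dvd int (x mod p) - int x"
  by (metis dvd_minus_iff minus_diff_eq minus_mod_eq_mult_div dvd_triv_left zmod_int)

lemma eqmod: "(x::nat) < p \<Longrightarrow> y < p \<Longrightarrow> int p dvd int x - int y \<Longrightarrow> x = y"
  by (metis mod_eq_dvd_iff mod_less of_nat_eq_iff zmod_int)

lemma modeq: "int p dvd int x - int y \<Longrightarrow> x mod p = y mod p"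
  by (metis mod_eq_dvd_iff of_nat_eq_iff zmod_int)

lemma dvd3: "(d::int) dvd A \<Longrightarrow> d dvd B \<Longrightarrow> G = u * A + v * B + d * m \<Longrightarrow> d dvd G"
  by (simp add: dvd_add dvd_mult)

lemma dvd1: "(d::int) dvd A \<Longrightarrow> G = u * A + d * m \<Longrightarrow> d dvd G"
  by (simp add: dvd_add dvd_mult)

lemma dvd5: "(d::int) dvd A1 \<Longrightarrow> d dvd A2 \<Longrightarrow> d dvd A3 \<Longrightarrow> d dvd A4 \<Longrightarrow> d dvd A5 \<Longrightarrow>
  G = ua * A1 + ub * A2 + uc * A3 + ud * A4 + ue * A5 + d * m \<Longrightarrow> d dvd G"
  by (simp add: dvd_add dvd_mult)

lemma modeq2: "x mod p = y mod p \<Longrightarrow> int p dvd int x - int y"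
  by (metis mod_eq_dvd_iff of_nat_eq_iff zmod_int)

lemma rowset: assumes "(x::nat) < p" shows "{y. \<exists>c<p. y = (x + c) mod p} = {..<p}"
proof
  show "{y. \<exists>c<p. y = (x + c) mod p} \<subseteq> {..<p}" using assms by auto
  show "{..<p} \<subseteq> {y. \<exists>c<p. y = (x + c) mod p}"
  proof
    fix y assume y: "y \<in> {..<p}"
    have p0: "p > 0" using assms by simp
    have d: "int p dvd int ((y + (p - x)) mod p) - int (y + (p - x))" by (rule md)
    have e: "int (p - x) = int p - int x" using assms by simp
    have "y mod p = (x + (y + (p - x)) mod p) mod p"
      by (rule modeq, rule dvd1[OF d, where u="-1" and m="-1"]) (simp add: e)
    then have "y = (x + (y + (p - x)) mod p) mod p" using y by simp
    moreover have "(y + (p - x)) mod p < p" using p0 by simp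
    ultimately show "y \<in> {y. \<exists>c<p. y = (x + c) mod p}" by blast
  qed
qed

lemma Bk_mem: "(i, j, x) \<in> Bk p k \<longleftrightarrow> i < p \<and> j < p \<and> x = (k * i + j) mod p"
  by (auto simp: Bk_def)

theorem theorem4p1:
  fixes p k s :: nat and T :: "triple set" and R :: "nat set"
  assumes "prime p" and "odd p"
    and "2 \<le> k" and "k \<le> p - 1"
    and "orthogonal_trade p 1 k T"
    and "\<exists>r c. (r, c, s) \<in> T"
    and "R = {r. \<exists>c. (r, c, s) \<in> T}"
  shows "\<exists>\<phi>. \<phi> permutes R \<and> (\<forall>r\<in>R. \<phi> r \<noteq> r) \<and>
     orth_trade_mate p 1 k
       {(r, c, (r + c) mod p) | r c. r \<in> R \<and> c < p}
       {(r, c, (\<phi> r + c) mod p) | r c. r \<in> R \<and> c < p} \<and>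
     card {(r, c, (r + c) mod p) | r c. r \<in> R \<and> c < p} = p * card R"
proof -
  have p0: "p > 0" using assms(1) prime_gt_0_nat by blast
  from assms(5) obtain T' where tm: "orth_trade_mate p 1 k T T'"
    unfolding orthogonal_trade_def by blast
  define L' where "L' = (Bk p 1 - T) \<union> T'"
  have TB: "T \<subseteq> Bk p 1" and dm: "disjoint_mate p T T'" and orth: "orthogonal p L' (Bk p k)"
    using tm unfolding orth_trade_mate_def L'_def by auto
  have pl: "partial_latin p T'" and cellsE: "cells T = cells T'" and disj: "T \<inter> T' = {}"
    and rows: "\<And>r. row_syms T r = row_syms T' r" and cols: "\<And>c. col_syms T c = col_syms T' c"
    using dm unfolding disjoint_mate_def by auto
  have T'b: "\<And>r c x. (r, c, x) \<in> T' \<Longrightarrow> r < p \<and> c < p \<and> x < p"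
    using pl unfolding partial_latin_def by blast
  have T'col: "\<And>r r' c x. (r, c, x) \<in> T' \<Longrightarrow> (r', c, x) \<in> T' \<Longrightarrow> r = r'"
    using pl unfolding partial_latin_def by blast
  have T'row: "\<And>r c c' x. (r, c, x) \<in> T' \<Longrightarrow> (r, c', x) \<in> T' \<Longrightarrow> c = c'"
    using pl unfolding partial_latin_def by blast
  have TBm: "\<And>r c x. (r, c, x) \<in> T \<Longrightarrow> r < p \<and> c < p \<and> x = (r + c) mod p"
    using TB by (auto simp: Bk_def)
  have sp: "s < p" using assms(6) TBm p0 by (metis mod_less_divisor)
  have Rsub: "R \<subseteq> {..<p}" using assms(7) TBm by auto
  have finR: "finite R" using Rsub finite_subset by blast
  have exT': "\<exists>c. (r, c, s) \<in> T'" if "r \<in> R" for r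
  proof -
    have "s \<in> row_syms T r" using that assms(7) unfolding row_syms_def by auto
    then show ?thesis using rows[of r] unfolding row_syms_def by auto
  qed
  define c' where "c' r = (SOME c. (r, c, s) \<in> T')" for r
  have c'T': "(r, c' r, s) \<in> T'" if "r \<in> R" for r
    unfolding c'_def using exT'[OF that] by (rule someI_ex)
  have c'lt: "c' r < p" if "r \<in> R" for r using T'b[OF c'T'[OF that]] by blast
  define \<phi> where "\<phi> r = (if r \<in> R then (s + p - c' r) mod p else r)" for r
  have \<phi>R: "\<phi> r \<in> R" if "r \<in> R" for r
  proof -
    have "s \<in> col_syms T' (c' r)" using c'T'[OF that] unfolding col_syms_def by auto
    then obtain r'' where r'': "(r'', c' r, s) \<in> T" using cols[of "c' r"] unfolding col_syms_def by auto
    have h: "r'' < p" "s = (r'' + c' r) mod p" using TBm[OF r''] by auto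
    have "r'' = (s + p - c' r) mod p"
    proof (rule eqmod)
      show "r'' < p" by fact
      show "(s + p - c' r) mod p < p" using p0 by simp
      have d1: "int p dvd int s - int (r'' + c' r)" using md[of p "r'' + c' r"] h by simp
      have d2: "int p dvd int ((s + p - c' r) mod p) - int (s + p - c' r)" by (rule md)
      have e: "int (s + p - c' r) = int s + int p - int (c' r)" using c'lt[OF that] by simp
      show "int p dvd int r'' - int ((s + p - c' r) mod p)"
        by (rule dvd3[OF d1 d2, where u="-1" and v="-1" and m="-1"]) (simp add: e)
    qed
    then show ?thesis using r'' that assms(7) unfolding \<phi>_def by auto
  qed
  have injc: "x = y" if "x < p" "y < p" "(s + p - x) mod p = (s + p - y) mod p" for x y
  proof (rule eqmod[OF that(1,2)])
    have "int p dvd int (s + p - y) - int (s + p - x)"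
      using that(3) by (metis mod_eq_dvd_iff of_nat_eq_iff zmod_int)
    moreover have "int (s + p - y) - int (s + p - x) = int x - int y" using that by simp
    ultimately show "int p dvd int x - int y" by simp
  qed
  have inj: "inj_on \<phi> R"
  proof (rule inj_onI)
    fix x y assume xy: "x \<in> R" "y \<in> R" "\<phi> x = \<phi> y"
    then have "c' x = c' y" using injc[OF c'lt c'lt] unfolding \<phi>_def by auto
    then show "x = y" using T'col c'T' xy by metis
  qed
  have perm: "\<phi> permutes R"
  proof (rule bij_imp_permutes)
    have "\<phi> ` R = R" using endo_inj_surj[OF finR _ inj] \<phi>R by blast
    then show "bij_betw \<phi> R R" using inj by (simp add: bij_betw_def)
    show "\<And>x. x \<notin> R \<Longrightarrow> \<phi> x = x" unfolding \<phi>_def by simp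
  qed
  have \<phi>img: "\<phi> ` R = R" using perm by (rule permutes_image)
  have der: "\<phi> r \<noteq> r" if "r \<in> R" for r
  proof
    assume eq: "\<phi> r = r"
    from that assms(7) obtain c0 where c0: "(r, c0, s) \<in> T" by auto
    have h: "c0 < p" "s = (r + c0) mod p" using TBm[OF c0] by auto
    have "(s + p - c0) mod p = r"
    proof (rule eqmod)
      show "(s + p - c0) mod p < p" using p0 by simp
      show "r < p" using TBm[OF c0] by simp
      have d1: "int p dvd int s - int (r + c0)" using md[of p "r + c0"] h by simp
      have d2: "int p dvd int ((s + p - c0) mod p) - int (s + p - c0)" by (rule md)
      have e: "int (s + p - c0) = int s + int p - int c0" using h by simp
      show "int p dvd int ((s + p - c0) mod p) - int r"
        by (rule dvd3[OF d1 d2, where u="1" and v="1" and m="1"]) (simp add: e)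
    qed
    then have "(s + p - c0) mod p = (s + p - c' r) mod p" using eq that unfolding \<phi>_def by simp
    then have "c0 = c' r" using injc[OF h(1) c'lt[OF that]] by simp
    then show False using c0 c'T'[OF that] disj by auto
  qed
  define col where "col i = (if i \<in> R then c' i else (s + p - i) mod p)" for i
  have \<phi>id: "\<phi> i = i" if "i \<notin> R" for i using that unfolding \<phi>_def by simp
  have \<phi>lt: "\<phi> i < p" if "i < p" for i
    using that \<phi>R Rsub \<phi>id by (cases "i \<in> R") auto
  have colL: "(i, col i, s) \<in> L' \<and> col i < p" if "i < p" for i
  proof (cases "i \<in> R")
    case True then show ?thesis using c'T' c'lt unfolding col_def L'_def by auto
  next
    case False
    have d: "int p dvd int ((s + p - i) mod p) - int (s + p - i)" by (rule md)
    have e: "int (s + p - i) = int s + int p - int i" using that by simp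
    have "(1 * i + (s + p - i) mod p) mod p = s mod p"
      by (rule modeq, rule dvd1[OF d, where u="1" and m="1"]) (simp add: e)
    then have "(i, col i, s) \<in> Bk p 1" using False that sp p0 unfolding col_def by (simp add: Bk_mem)
    moreover have "(i, col i, s) \<notin> T" using False assms(7) by auto
    ultimately show ?thesis using p0 unfolding L'_def col_def using False by auto
  qed
  have \<phi>col: "int p dvd int (\<phi> i) - int s + int (col i)" if "i < p" for i
  proof (cases "i \<in> R")
    case True
    have d: "int p dvd int ((s + p - c' i) mod p) - int (s + p - c' i)" by (rule md)
    have e: "int (s + p - c' i) = int s + int p - int (c' i)" using c'lt[OF True] by simp
    have q: "\<phi> i = (s + p - c' i) mod p" "col i = c' i" using True unfolding \<phi>_def col_def by auto
    show ?thesis unfolding q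
      by (rule dvd1[OF d, where u="1" and m="1"]) (simp add: e)
  next
    case False
    have d: "int p dvd int ((s + p - i) mod p) - int (s + p - i)" by (rule md)
    have e: "int (s + p - i) = int s + int p - int i" using that by simp
    have q: "\<phi> i = i" "col i = (s + p - i) mod p" using False unfolding \<phi>_def col_def by auto
    show ?thesis unfolding q
      by (rule dvd1[OF d, where u="1" and m="1"]) (simp add: e)
  qed
  define h where "h i = (k * i + col i) mod p" for i
  have hinj: "inj_on h {..<p}"
  proof (rule inj_onI)
    fix i1 i2 assume i: "i1 \<in> {..<p}" "i2 \<in> {..<p}" "h i1 = h i2"
    define b where "b = h i1"
    have bp: "b < p" unfolding b_def h_def using p0 by simp
    have "card {(i, j). i < p \<and> j < p \<and> (i, j, s) \<in> L' \<and> (i, j, b) \<in> Bk p k} = 1"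
      using orth sp bp unfolding orthogonal_def by blast
    then obtain x where x: "{(i, j). i < p \<and> j < p \<and> (i, j, s) \<in> L' \<and> (i, j, b) \<in> Bk p k} = {x}"
      by (rule card_1_singletonE)
    have "(i1, col i1) \<in> {(i, j). i < p \<and> j < p \<and> (i, j, s) \<in> L' \<and> (i, j, b) \<in> Bk p k}"
      using colL[of i1] i unfolding b_def h_def by (auto simp: Bk_mem)
    moreover have "(i2, col i2) \<in> {(i, j). i < p \<and> j < p \<and> (i, j, s) \<in> L' \<and> (i, j, b) \<in> Bk p k}"
      using colL[of i2] i unfolding b_def h_def by (auto simp: Bk_mem)
    ultimately show "i1 = i2" unfolding x by (metis prod.inject singletonD)
  qed
  have hsurj: "h ` {..<p} = {..<p}"
    by (rule endo_inj_surj[OF _ _ hinj]) (auto simp: h_def p0)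
  define U where "U = {(r, c, (r + c) mod p) | r c. r \<in> R \<and> c < p}"
  define U' where "U' = {(r, c, (\<phi> r + c) mod p) | r c. r \<in> R \<and> c < p}"
  have Umem: "(r, c, x) \<in> U \<longleftrightarrow> r \<in> R \<and> c < p \<and> x = (r + c) mod p" for r c x
    unfolding U_def by auto
  have U'mem: "(r, c, x) \<in> U' \<longleftrightarrow> r \<in> R \<and> c < p \<and> x = (\<phi> r + c) mod p" for r c x
    unfolding U'_def by auto
  have L''mem: "(i, j, a) \<in> (Bk p 1 - U) \<union> U' \<longleftrightarrow> a = (\<phi> i + j) mod p"
    if "i < p" "j < p" for i j a
    using that \<phi>id by (cases "i \<in> R") (auto simp: Umem U'mem Bk_mem)
  have orthU: "orthogonal p ((Bk p 1 - U) \<union> U') (Bk p k)"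
    unfolding orthogonal_def
  proof (intro allI impI)
    fix a b :: nat assume ab: "a < p" "b < p"
    have "(b + (p - a) + s) mod p \<in> h ` {..<p}" using hsurj p0 by simp
    then obtain i0 where i0: "i0 < p" "h i0 = (b + (p - a) + s) mod p" by auto
    define j0 where "j0 = (a + (p - \<phi> i0)) mod p"
    have j0p: "j0 < p" unfolding j0_def using p0 by simp
    have F1: "int p dvd int j0 - int (a + (p - \<phi> i0))" unfolding j0_def by (rule md)
    have F1e: "int (p - \<phi> i0) = int p - int (\<phi> i0)" using \<phi>lt[OF i0(1)] by simp
    have F2: "int p dvd int (\<phi> i0) - int s + int (col i0)" by (rule \<phi>col[OF i0(1)])
    have F3: "int p dvd int (h i0) - int (k * i0 + col i0)" unfolding h_def by (rule md)
    have F4: "int p dvd int ((b + (p - a) + s) mod p) - int (b + (p - a) + s)" by (rule md)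
    have F4e: "int (p - a) = int p - int a" using ab by simp
    have S: "{(i, j). i < p \<and> j < p \<and> (i, j, a) \<in> (Bk p 1 - U) \<union> U' \<and> (i, j, b) \<in> Bk p k} = {(i0, j0)}"
    proof (rule set_eqI, rule iffI)
      fix x assume "x \<in> {(i, j). i < p \<and> j < p \<and> (i, j, a) \<in> (Bk p 1 - U) \<union> U' \<and> (i, j, b) \<in> Bk p k}"
      then obtain i j where x0: "x = (i, j)" "i < p" "j < p" "(i, j, a) \<in> (Bk p 1 - U) \<union> U'" "(i, j, b) \<in> Bk p k"
        by blast
      then have x: "x = (i, j)" "i < p" "j < p" "a = (\<phi> i + j) mod p" "b = (k * i + j) mod p"
        using L''mem[OF x0(2,3)] by (auto simp: Bk_mem)
      have G1: "int p dvd int a - int (\<phi> i + j)" using x(4) md by metis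
      have G2: "int p dvd int b - int (k * i + j)" using x(5) md by metis
      have H2: "int p dvd int (\<phi> i) - int s + int (col i)" by (rule \<phi>col[OF x(2)])
      have H3: "int p dvd int (h i) - int (k * i + col i)" unfolding h_def by (rule md)
      have "h i = h i0"
      proof (rule eqmod)
        show "h i < p" "h i0 < p" unfolding h_def using p0 by auto
        show "int p dvd int (h i) - int (h i0)"
          by (rule dvd5[OF G1 G2 H2 H3 F4, where ua=1 and ub="-1" and uc=1 and ud=1 and ue="-1" and m="-1"])
            (simp add: i0(2) F4e)
      qed
      then have ii: "i = i0" using hinj x(2) i0(1) by (auto dest: inj_onD)
      have "j = j0"
      proof (rule eqmod[OF x(3) j0p])
        show "int p dvd int j - int j0"
          by (rule dvd5[OF G1 F1 G1 G1 G1, where ua="-1" and ub="-1" and uc=0 and ud=0 and ue=0 and m="-1"])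
            (simp add: ii F1e)
      qed
      then show "x \<in> {(i0, j0)}" using ii x by simp
    next
      fix x assume "x \<in> {(i0, j0)}"
      then have x: "x = (i0, j0)" by simp
      have "(\<phi> i0 + j0) mod p = a mod p"
        by (rule modeq, rule dvd1[OF F1, where u=1 and m=1]) (simp add: F1e)
      then have e1: "a = (\<phi> i0 + j0) mod p" using ab by simp
      have "(k * i0 + j0) mod p = b mod p"
        by (rule modeq, rule dvd5[OF F1 F2 F3 F4 F4, where ua=1 and ub="-1" and uc="-1" and ud=1 and ue=0 and m=2])
          (simp add: F1e F4e i0(2))
      then have e2: "b = (k * i0 + j0) mod p" using ab by simp
      show "x \<in> {(i, j). i < p \<and> j < p \<and> (i, j, a) \<in> (Bk p 1 - U) \<union> U' \<and> (i, j, b) \<in> Bk p k}"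
        using x i0(1) j0p L''mem[OF i0(1) j0p] e1 e2 by (auto simp: Bk_mem)
    qed
    show "card {(i, j). i < p \<and> j < p \<and> (i, j, a) \<in> (Bk p 1 - U) \<union> U' \<and> (i, j, b) \<in> Bk p k} = 1"
      unfolding S by simp
  qed
  have plU': "partial_latin p U'"
    unfolding partial_latin_def
  proof (intro conjI allI impI)
    show "\<forall>(r, c, x) \<in> U'. r < p \<and> c < p \<and> x < p" using Rsub p0 by (auto simp: U'_def)
    show "\<And>r c x x'. (r, c, x) \<in> U' \<Longrightarrow> (r, c, x') \<in> U' \<Longrightarrow> x = x'" by (auto simp: U'mem)
    show "c = c'" if "(r, c, x) \<in> U'" "(r, c', x) \<in> U'" for r c c' x
    proof -
      have h: "c < p" "c' < p" "(\<phi> r + c) mod p = (\<phi> r + c') mod p" using that by (auto simp: U'mem)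
      show ?thesis using eqmod[OF h(1,2)] modeq2[OF h(3)] by simp
    qed
    show "r = r'" if "(r, c, x) \<in> U'" "(r', c, x) \<in> U'" for r r' c x
    proof -
      have h: "r \<in> R" "r' \<in> R" "(\<phi> r + c) mod p = (\<phi> r' + c) mod p" using that by (auto simp: U'mem)
      have "\<phi> r = \<phi> r'" using eqmod[OF \<phi>lt \<phi>lt] modeq2[OF h(3)] h Rsub by auto
      then show ?thesis using inj h by (auto dest: inj_onD)
    qed
  qed
  have cellsU: "cells U = cells U'" unfolding cells_def by (auto simp: Umem U'mem)
  have disjU: "U \<inter> U' = {}"
  proof (rule ccontr)
    assume "U \<inter> U' \<noteq> {}"
    then obtain r c x where "(r, c, x) \<in> U" "(r, c, x) \<in> U'" by auto
    then have h: "r \<in> R" "c < p" "(r + c) mod p = (\<phi> r + c) mod p" by (auto simp: Umem U'mem)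
    have "r = \<phi> r" using eqmod[OF _ \<phi>lt] modeq2[OF h(3)] h Rsub by auto
    then show False using der h by metis
  qed
  have rowsU: "row_syms U r = row_syms U' r" for r
  proof (cases "r \<in> R")
    case True
    have "row_syms U r = {y. \<exists>c<p. y = (r + c) mod p}" unfolding row_syms_def using True by (auto simp: Umem)
    also have "\<dots> = {..<p}" using rowset True Rsub by auto
    also have "\<dots> = {y. \<exists>c<p. y = (\<phi> r + c) mod p}" using rowset[OF \<phi>lt] True Rsub by auto
    also have "\<dots> = row_syms U' r" unfolding row_syms_def using True by (auto simp: U'mem)
    finally show ?thesis .
  next
    case False then show ?thesis unfolding row_syms_def by (auto simp: Umem U'mem)
  qed
  have colsU: "col_syms U c = col_syms U' c" for c
  proof -
    have "col_syms U c = (if c < p then (\<lambda>r. (r + c) mod p) ` R else {})"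
      unfolding col_syms_def by (auto simp: Umem)
    also have "\<dots> = (if c < p then (\<lambda>r. (r + c) mod p) ` (\<phi> ` R) else {})" using \<phi>img by simp
    also have "\<dots> = col_syms U' c" unfolding col_syms_def by (auto simp: U'mem)
    finally show ?thesis .
  qed
  have UB: "U \<subseteq> Bk p 1" using Rsub by (auto simp: Umem Bk_mem)
  have mate: "orth_trade_mate p 1 k U U'"
    unfolding orth_trade_mate_def disjoint_mate_def
    using UB plU' cellsU disjU rowsU colsU orthU by blast
  have "U = (\<lambda>(r, c). (r, c, (r + c) mod p)) ` (R \<times> {..<p})" unfolding U_def by auto
  moreover have "inj_on (\<lambda>(r, c). (r, c, (r + c) mod p)) (R \<times> {..<p})" by (auto intro: inj_onI)
  ultimately have "card U = card (R \<times> {..<p})" by (simp add: card_image)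
  then have cardU: "card U = p * card R" by (simp add: card_cartesian_product)
  show ?thesis
    using perm der mate cardU unfolding U_def U'_def by blast
qed
end
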